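(* (i) There exist a sequence of Pauli Hamiltonians $H^{(m)}=\sum_i c_i P_i$ with all coefficients satisfying $|c_i|=\Theta(1)$, indexed by $m\to\infty$, such that the grouping $\mathcal{G}^{(m)}_{\mathrm{SI}}$ produced by sorted insertion has $m$ groups, and an overlapped grouping $\mathcal{R}^{(m)}$ of $H^{(m)}$, such that $$\frac{\mathrm{Var}^*(\mathcal{G}^{(m)}_{\mathrm{SI}})}{\mathrm{Var}^*(\mathcal{R}^{(m)})}=\Theta(m),$$ where variances are computed in the state-independent, zero-covariance model described in the context (for the maximally mixed state). (ii) In this same model, this is asymptotically the largest possible reduction: for any (disjoint) grouping $\mathcal{G}$ with $m$ groups of a Hamiltonian $H$ and any overlapped grouping $\mathcal{R}$ of $H$, $\mathrm{Var}^*(\mathcal{G})/\mathrm{Var}^*(\mathcal{R})=O(m)$.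
   Context: A Pauli Hamiltonian on $n$ qubits is $H=\sum_{i=1}^N c_iP_i$ with real nonzero $c_i$ and distinct Pauli strings $P_i\in\{I,X,Y,Z\}^{\otimes n}$; $\mathrm{supp}(H)=\{P_1,\dots,P_N\}$. A grouping of $H$ is a list $\mathcal{G}=(G^{[1]},\dots,G^{[m]})$ of pairwise disjoint sets, each consisting of mutually commuting operators of $\mathrm{supp}(H)$, whose union is $\mathrm{supp}(H)$; an overlapped grouping is the same without the disjointness requirement. Sorted insertion: order the Pauli terms by decreasing $|c_i|$ and insert each term in turn into the first existing group all of whose members commute with it, creating a new group if there is none. Measurement model: a total budget of $M$ shots is split as positive shot counts $M_j$ with $\sum_j M_j=M$; group $G^{[j]}$ is measured $M_j$ times, each shot giving simultaneous $\pm1$ outcomes of all its operators; shots are independent. For $P_i$ let $\Gamma(i)=\{j:P_i\in G^{[j]}\}$; $\langle P_i\rangle$ is estimated by $\sum_{j\in\Gamma(i)}w_{i,j}\overline{\langle P_i\rangle}_{(j)}$ with $\sum_{j\in\Gamma(i)}w_{i,j}=1$, where $\overline{\langle P_i\rangle}_{(j)}$ is the sample mean over the shots of group $j$, and the energy estimator is $\overline{E}(w)=\sum_ic_i\overline{\langle P_i\rangle}(w)$. State-independent zero-covariance model: each Pauli has single-shot variance $1$ and all covariances between distinct Pauli operators are $0$ (as for the maximally mixed state). $\mathrm{Var}^*(\cdot)$ denotes the variance of $\overline{E}(w)$ in this model minimized over the weights $w$ and over the shot allocation $\{M_j\}$ with fixed total $M$; for a disjoint grouping this equals $(\sum_j\sqrt{S_j})^2/M$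 with $S_j=\sum_{i:P_i\in G^{[j]}}c_i^2$. *)

theory Defs
  imports Complex_Main
begin

datatype pauli = PI | PX | PY | PZ

type_synonym pstring = "pauli list"

text \<open>A computational basis state of n qubits is a bool list of length n; a state vector
is a function from basis states to complex amplitudes.  A single-qubit Pauli maps the basis
state b to phase1 p b times the basis state flip1 p b
(X|b> = |not b>, Z|b> = (-1)^b |b>, Y|b> = i (-1)^b |not b>).\<close>

fun flip1 :: "pauli \<Rightarrow> bool \<Rightarrow> bool" where
  "flip1 PI b = b"
| "flip1 PX b = (\<not> b)"
| "flip1 PY b = (\<not> b)"
| "flip1 PZ b = b"

fun phase1 :: "pauli \<Rightarrow> bool \<Rightarrow> complex" where
  "phase1 PI b = 1"
| "phase1 PX b = 1"
| "phase1 PY b = (if b then - \<i> else \<i>)"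
| "phase1 PZ b = (if b then -1 else 1)"

text \<open>Action of the tensor-product operator P on a state vector psi:
(P psi)(x) = <x|P|y> psi(y) with y the unique preimage of x, namely y = flip(x).\<close>

definition pauli_op :: "pstring \<Rightarrow> (bool list \<Rightarrow> complex) \<Rightarrow> (bool list \<Rightarrow> complex)" where
  "pauli_op P \<psi> = (\<lambda>x. if length x = length P then
       (let y = map2 flip1 P x in (\<Prod>k<length P. phase1 (P ! k) (y ! k)) * \<psi> y)
     else 0)"

definition commutes :: "pstring \<Rightarrow> pstring \<Rightarrow> bool" where
  "commutes P Q \<longleftrightarrow> (\<forall>\<psi>. pauli_op P (pauli_op Q \<psi>) = pauli_op Q (pauli_op P \<psi>))"

definition supp :: "(pstring \<Rightarrow> real) \<Rightarrow> pstring set" where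
  "supp c = {P. c P \<noteq> 0}"

definition pauli_hamiltonian :: "nat \<Rightarrow> (pstring \<Rightarrow> real) \<Rightarrow> bool" where
  "pauli_hamiltonian n c \<longleftrightarrow> finite (supp c) \<and> supp c \<noteq> {} \<and> (\<forall>P\<in>supp c. length P = n)"

definition commuting_set :: "pstring set \<Rightarrow> bool" where
  "commuting_set S \<longleftrightarrow> (\<forall>P\<in>S. \<forall>Q\<in>S. commutes P Q)"

definition overlapped_grouping :: "(pstring \<Rightarrow> real) \<Rightarrow> pstring set list \<Rightarrow> bool" where
  "overlapped_grouping c R \<longleftrightarrow>
     (\<forall>j<length R. R ! j \<subseteq> supp c \<and> commuting_set (R ! j)) \<and> \<Union>(set R) = supp c"

definition grouping :: "(pstring \<Rightarrow> real) \<Rightarrow> pstring set list \<Rightarrow> bool" where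
  "grouping c G \<longleftrightarrow> overlapped_grouping c G \<and>
     (\<forall>i<length G. \<forall>j<length G. i \<noteq> j \<longrightarrow> G ! i \<inter> G ! j = {})"

fun si_insert :: "pstring set list \<Rightarrow> pstring \<Rightarrow> pstring set list" where
  "si_insert [] P = [{P}]"
| "si_insert (g # gs) P =
     (if \<forall>Q\<in>g. commutes Q P then insert P g # gs else g # si_insert gs P)"

definition sorted_insertion :: "pstring list \<Rightarrow> pstring set list" where
  "sorted_insertion ord = foldl si_insert [] ord"

definition si_order :: "(pstring \<Rightarrow> real) \<Rightarrow> pstring list \<Rightarrow> bool" where
  "si_order c ord \<longleftrightarrow> distinct ord \<and> set ord = supp c \<and>
     sorted_wrt (\<lambda>P Q. \<bar>c P\<bar> \<ge> \<bar>c Q\<bar>) ord"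

definition Gamma :: "pstring set list \<Rightarrow> pstring \<Rightarrow> nat set" where
  "Gamma R P = {j. j < length R \<and> P \<in> R ! j}"

definition shot_alloc :: "real \<Rightarrow> pstring set list \<Rightarrow> (nat \<Rightarrow> real) \<Rightarrow> bool" where
  "shot_alloc M R Ms \<longleftrightarrow> (\<forall>j<length R. Ms j > 0) \<and> (\<Sum>j<length R. Ms j) = M"

definition est_weights :: "(pstring \<Rightarrow> real) \<Rightarrow> pstring set list \<Rightarrow> (pstring \<Rightarrow> nat \<Rightarrow> real) \<Rightarrow> bool" where
  "est_weights c R w \<longleftrightarrow> (\<forall>P\<in>supp c. (\<Sum>j\<in>Gamma R P. w P j) = 1)"

text \<open>Variance of the energy estimator when every Pauli has single-shot variance 1, distinct
Paulis have zero covariance and shots are independent.\<close>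

definition est_var :: "(pstring \<Rightarrow> real) \<Rightarrow> pstring set list \<Rightarrow> (pstring \<Rightarrow> nat \<Rightarrow> real)
    \<Rightarrow> (nat \<Rightarrow> real) \<Rightarrow> real" where
  "est_var c R w Ms = (\<Sum>P\<in>supp c. (c P)\<^sup>2 * (\<Sum>j\<in>Gamma R P. (w P j)\<^sup>2 / Ms j))"

definition VarStar :: "real \<Rightarrow> (pstring \<Rightarrow> real) \<Rightarrow> pstring set list \<Rightarrow> real" where
  "VarStar M c R = Inf {est_var c R w Ms | w Ms. est_weights c R w \<and> shot_alloc M R Ms}"

end

theory Submission
  imports Defs
begin


lemma flip_comm: "flip1 p (flip1 q b) = flip1 q (flip1 p b)"
  by (cases p; cases q; simp)

definition anti :: "pauli \<Rightarrow> pauli \<Rightarrow> bool" where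
  "anti p q \<longleftrightarrow> p \<noteq> PI \<and> q \<noteq> PI \<and> p \<noteq> q"

definition fph :: "pauli \<Rightarrow> pauli \<Rightarrow> bool \<Rightarrow> complex" where
  "fph p q b = phase1 p (flip1 p b) * phase1 q (flip1 q (flip1 p b))"

lemma fph_swap: "fph p q b = (if anti p q then -1 else 1) * fph q p b"
  unfolding fph_def anti_def by (cases p; cases q; cases b) simp_all

lemma phase_nz: "phase1 p b \<noteq> 0"
  by (cases p; cases b) simp_all

lemma fph_nz: "fph p q b \<noteq> 0"
  unfolding fph_def by (simp add: phase_nz)

lemma op_op:
  assumes "length P = n" "length Q = n" "length x = n"
  shows "pauli_op P (pauli_op Q \<psi>) x =
    (\<Prod>k<n. fph (P!k) (Q!k) (x!k)) * \<psi> (map2 flip1 Q (map2 flip1 P x))"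
proof -
  let ?y = "map2 flip1 P x"
  have ly: "length ?y = n" using assms by simp
  have yk: "\<And>k. k < n \<Longrightarrow> ?y ! k = flip1 (P!k) (x!k)" using assms by simp
  have "pauli_op P (pauli_op Q \<psi>) x = (\<Prod>k<n. phase1 (P ! k) (?y ! k)) *
     ((\<Prod>k<n. phase1 (Q ! k) (map2 flip1 Q ?y ! k)) * \<psi> (map2 flip1 Q ?y))"
    using assms ly unfolding pauli_op_def Let_def by simp
  also have "\<dots> = (\<Prod>k<n. phase1 (P ! k) (?y ! k) * phase1 (Q ! k) (map2 flip1 Q ?y ! k)) * \<psi> (map2 flip1 Q ?y)"
    by (simp add: prod.distrib)
  also have "(\<Prod>k<n. phase1 (P ! k) (?y ! k) * phase1 (Q ! k) (map2 flip1 Q ?y ! k)) = (\<Prod>k<n. fph (P!k) (Q!k) (x!k))"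
    by (rule prod.cong) (use assms in \<open>auto simp: fph_def\<close>)
  finally show ?thesis .
qed

lemma prod_sign: "finite A \<Longrightarrow> (\<Prod>k\<in>A. if Pr k then (-1::complex) else 1) = (-1) ^ card {k\<in>A. Pr k}"
proof -
  assume fA: "finite A"
  have "(\<Prod>k\<in>A. if Pr k then (-1::complex) else 1) = (\<Prod>k\<in>{k\<in>A. Pr k}. -1)"
    using fA by (rule prod.inter_filter[symmetric])
  then show ?thesis by simp
qed

lemma map2_comm: "length P = length Q \<Longrightarrow> length x = length P \<Longrightarrow>
   map2 flip1 Q (map2 flip1 P x) = map2 flip1 P (map2 flip1 Q x)"
  by (rule nth_equalityI) (auto simp: flip_comm)

lemma commutes_iff:
  assumes "length P = n" "length Q = n"
  shows "commutes P Q \<longleftrightarrow> even (card {k. k < n \<and> anti (P!k) (Q!k)})"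
proof -
  define F where "F = (\<lambda>A B x. \<Prod>k<n. fph (A!k) (B!k) ((x::bool list)!k))"
  have FS: "F P Q x = (-1) ^ card {k. k < n \<and> anti (P!k) (Q!k)} * F Q P x" for x
  proof -
    have "F P Q x = (\<Prod>k<n. (if anti (P!k) (Q!k) then -1 else 1) * fph (Q!k) (P!k) (x!k))"
      unfolding F_def by (rule prod.cong) (simp_all add: fph_swap[of "P!_"])
    also have "\<dots> = (\<Prod>k<n. (if anti (P!k) (Q!k) then -1 else 1)) * F Q P x"
      unfolding F_def by (simp add: prod.distrib)
    also have "(\<Prod>k<n. (if anti (P!k) (Q!k) then -1 else (1::complex))) = (-1) ^ card {k. k < n \<and> anti (P!k) (Q!k)}"
      by (simp add: prod_sign lessThan_def)
    finally show ?thesis .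
  qed
  have Fnz: "F Q P x \<noteq> 0" for x unfolding F_def by (simp add: fph_nz)
  show ?thesis
  proof
    assume c: "commutes P Q"
    define x where "x = replicate n False"
    have lx: "length x = n" by (simp add: x_def)
    have "pauli_op P (pauli_op Q (\<lambda>_. 1)) x = pauli_op Q (pauli_op P (\<lambda>_. 1)) x"
      using c unfolding commutes_def by simp
    then have "F P Q x = F Q P x" using op_op[OF assms lx] op_op[OF assms(2,1) lx] unfolding F_def by simp
    then have "(-1::complex) ^ card {k. k < n \<and> anti (P!k) (Q!k)} = 1" using FS[of x] Fnz[of x] by simp
    then show "even (card {k. k < n \<and> anti (P!k) (Q!k)})"
      by (auto simp: minus_one_power_iff split: if_splits)
  next
    assume e: "even (card {k. k < n \<and> anti (P!k) (Q!k)})"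
    show "commutes P Q" unfolding commutes_def
    proof (intro allI ext)
      fix \<psi> x
      show "pauli_op P (pauli_op Q \<psi>) x = pauli_op Q (pauli_op P \<psi>) x"
      proof (cases "length x = n")
        case True
        then show ?thesis using op_op[OF assms True] op_op[OF assms(2,1) True] FS[of x] e map2_comm[of P Q x] assms
          unfolding F_def by simp
      next
        case False
        then show ?thesis using assms by (simp add: pauli_op_def)
      qed
    qed
  qed
qed

lemma commutes_sym: "commutes P Q \<Longrightarrow> commutes Q P"
  unfolding commutes_def by metis

lemma commutes_refl: "commutes P P"
  unfolding commutes_def by simp



lemma Gamma_sub: "Gamma R P \<subseteq> {..<length R}"
  unfolding Gamma_def by auto

lemma Gamma_fin: "finite (Gamma R P)"
  using Gamma_sub finite_subset by blast

lemma est_var_nonneg: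
  assumes "shot_alloc M R Ms"
  shows "0 \<le> est_var c R w Ms"
  unfolding est_var_def
proof (rule sum_nonneg)
  fix P
  have "\<forall>j\<in>Gamma R P. 0 \<le> (w P j)\<^sup>2 / Ms j"
    using assms Gamma_sub unfolding shot_alloc_def by (auto intro!: divide_nonneg_pos)
  then show "0 \<le> (c P)\<^sup>2 * (\<Sum>j\<in>Gamma R P. (w P j)\<^sup>2 / Ms j)"
    by (simp add: sum_nonneg)
qed

lemma VarStar_le:
  assumes "est_weights c R w" "shot_alloc M R Ms"
  shows "VarStar M c R \<le> est_var c R w Ms"
  unfolding VarStar_def
proof (rule cInf_lower)
  show "est_var c R w Ms \<in> {est_var c R w Ms |w Ms. est_weights c R w \<and> shot_alloc M R Ms}"
    using assms by blast
  show "bdd_below {est_var c R w Ms |w Ms. est_weights c R w \<and> shot_alloc M R Ms}"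
    by (rule bdd_belowI[of _ 0]) (auto intro: est_var_nonneg)
qed

lemma VarStar_ge:
  assumes "est_weights c R w0" "shot_alloc M R Ms0"
    and "\<And>w Ms. est_weights c R w \<Longrightarrow> shot_alloc M R Ms \<Longrightarrow> L \<le> est_var c R w Ms"
  shows "L \<le> VarStar M c R"
  unfolding VarStar_def
  by (rule cInf_greatest) (use assms in blast)+

lemma idx_weights:
  assumes "\<forall>P\<in>supp c. idx P < length R \<and> P \<in> R ! idx P"
  shows "est_weights c R (\<lambda>P j. if j = idx P then 1 else 0)"
  unfolding est_weights_def
proof
  fix P assume "P \<in> supp c"
  then have "idx P \<in> Gamma R P" using assms unfolding Gamma_def by auto
  then show "(\<Sum>j\<in>Gamma R P. if j = idx P then 1 else 0) = (1::real)"
    using Gamma_fin by (simp add: sum.delta)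
qed

lemma idx_var:
  assumes "\<forall>P\<in>supp c. idx P < length R \<and> P \<in> R ! idx P"
  shows "est_var c R (\<lambda>P j. if j = idx P then 1 else 0) Ms = (\<Sum>P\<in>supp c. (c P)\<^sup>2 / Ms (idx P))"
  unfolding est_var_def
proof (rule sum.cong)
  fix P assume "P \<in> supp c"
  then have "idx P \<in> Gamma R P" using assms unfolding Gamma_def by auto
  moreover have "(\<Sum>j\<in>Gamma R P. (if j = idx P then 1 else 0)\<^sup>2 / Ms j) =
     (\<Sum>j\<in>Gamma R P. if j = idx P then 1 / Ms j else 0)"
    by (rule sum.cong) auto
  ultimately show "(c P)\<^sup>2 * (\<Sum>j\<in>Gamma R P. (if j = idx P then 1 else 0)\<^sup>2 / Ms j) = (c P)\<^sup>2 / Ms (idx P)"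
    using Gamma_fin by (simp add: sum.delta)
qed simp

lemma exists_admissible:
  assumes "overlapped_grouping c R" "supp c \<noteq> {}" "M > 0"
  shows "\<exists>w Ms. est_weights c R w \<and> shot_alloc M R Ms"
proof -
  define idx where "idx P = (SOME j. j < length R \<and> P \<in> R ! j)" for P
  have cov: "\<forall>P\<in>supp c. idx P < length R \<and> P \<in> R ! idx P"
  proof
    fix P assume "P \<in> supp c"
    then have "\<exists>j. j < length R \<and> P \<in> R ! j"
      using assms(1) unfolding overlapped_grouping_def by (metis UnionE in_set_conv_nth)
    then show "idx P < length R \<and> P \<in> R ! idx P" unfolding idx_def by (rule someI_ex)
  qed
  have "length R > 0" using assms(1,2) unfolding overlapped_grouping_def by auto
  then have "shot_alloc M R (\<lambda>_. M / length R)"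
    unfolding shot_alloc_def using assms(3) by auto
  then show ?thesis using idx_weights[OF cov] by blast
qed

lemma tangent: "0 < x \<Longrightarrow> 0 < M \<Longrightarrow> 2 * w / M - x / M\<^sup>2 \<le> (w::real)\<^sup>2 / x"
proof -
  assume x: "0 < x" and M: "0 < M"
  have eq: "(w::real)\<^sup>2 / x - (2 * w / M - x / M\<^sup>2) = (w - x / M)\<^sup>2 / x"
    using x M by (simp add: power2_eq_square field_simps)
  have "0 \<le> (w - x / M)\<^sup>2 / x" using x by simp
  then show ?thesis using eq by linarith
qed

lemma est_var_lower:
  assumes "est_weights c R w" "shot_alloc M R Ms" "M > 0"
  shows "(\<Sum>P\<in>supp c. (c P)\<^sup>2) / M \<le> est_var c R w Ms"
proof -
  have pos: "\<And>j. j \<in> Gamma R P \<Longrightarrow> 0 < Ms j" for P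
    using assms(2) Gamma_sub unfolding shot_alloc_def by auto
  have inner: "1 / M \<le> (\<Sum>j\<in>Gamma R P. (w P j)\<^sup>2 / Ms j)" if "P \<in> supp c" for P
  proof -
    have "(\<Sum>j\<in>Gamma R P. 2 * w P j / M - Ms j / M\<^sup>2) \<le> (\<Sum>j\<in>Gamma R P. (w P j)\<^sup>2 / Ms j)"
      using pos assms(3) by (intro sum_mono tangent) auto
    moreover have "(\<Sum>j\<in>Gamma R P. 2 * w P j / M - Ms j / M\<^sup>2) =
        2 / M * (\<Sum>j\<in>Gamma R P. w P j) - (\<Sum>j\<in>Gamma R P. Ms j) / M\<^sup>2"
      by (simp add: sum_subtractf sum_divide_distrib sum_distrib_left)
    moreover have "(\<Sum>j\<in>Gamma R P. w P j) = 1" using assms(1) that unfolding est_weights_def by auto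
    moreover have "(\<Sum>j\<in>Gamma R P. Ms j) \<le> (\<Sum>j<length R. Ms j)"
      by (rule sum_mono2) (use Gamma_sub assms(2) in \<open>auto simp: shot_alloc_def\<close>)
    moreover have "(\<Sum>j<length R. Ms j) = M" using assms(2) unfolding shot_alloc_def by auto
    ultimately have a: "(\<Sum>j\<in>Gamma R P. Ms j) / M\<^sup>2 \<le> M / M\<^sup>2"
      and b: "2 / M - (\<Sum>j\<in>Gamma R P. Ms j) / M\<^sup>2 \<le> (\<Sum>j\<in>Gamma R P. (w P j)\<^sup>2 / Ms j)"
      by (auto intro: divide_right_mono)
    from a b have "2 / M - M / M\<^sup>2 \<le> (\<Sum>j\<in>Gamma R P. (w P j)\<^sup>2 / Ms j)"
      by linarith
    moreover have "2 / M - M / M\<^sup>2 = 1 / M" using assms(3) by (simp add: power2_eq_square field_simps)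
    ultimately show ?thesis by simp
  qed
  have "(\<Sum>P\<in>supp c. (c P)\<^sup>2) / M = (\<Sum>P\<in>supp c. (c P)\<^sup>2 * (1 / M))"
    by (simp add: sum_divide_distrib)
  also have "\<dots> \<le> est_var c R w Ms" unfolding est_var_def
  proof (rule sum_mono)
    fix P assume "P \<in> supp c"
    then have "(c P)\<^sup>2 * (1 / M) \<le> (c P)\<^sup>2 * (\<Sum>j\<in>Gamma R P. (w P j)\<^sup>2 / Ms j)"
      using inner by (intro mult_left_mono) auto
    then show "(c P)\<^sup>2 * (1 / M) \<le> (c P)\<^sup>2 * (\<Sum>j\<in>Gamma R P. (w P j)\<^sup>2 / Ms j)" .
  qed
  finally show ?thesis .
qed

lemma recip_sum: 
  assumes "\<forall>j<m. 0 < Ms j" "(\<Sum>j<m. Ms j) = M" "m > 0" "M > 0"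
  shows "real m ^ 2 / M \<le> (\<Sum>j<m. 1 / Ms j)"
proof -
  define t where "t = M / real m"
  have t: "t > 0" using assms unfolding t_def by auto
  have "(\<Sum>j<m. 2 * 1 / t - Ms j / t\<^sup>2) \<le> (\<Sum>j<m. 1\<^sup>2 / Ms j)"
    using assms t by (intro sum_mono tangent) auto
  moreover have "(\<Sum>j<m. 2 * 1 / t - Ms j / t\<^sup>2) = real m * 2 / t - M / t\<^sup>2"
    using assms(2) by (simp add: sum_subtractf sum_divide_distrib[symmetric])
  moreover have "real m * 2 / t - M / t\<^sup>2 = real m ^ 2 / M"
    unfolding t_def using assms by (simp add: power2_eq_square field_simps)
  ultimately show ?thesis by simp
qed



lemma set_nth_img: "set G = (!) G ` {..<length G}"
  by (auto simp: in_set_conv_nth)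

lemma cover_idx:
  assumes "overlapped_grouping c R" "P \<in> supp c"
  shows "\<exists>j. j < length R \<and> P \<in> R ! j"
  using assms unfolding overlapped_grouping_def by (metis UnionE in_set_conv_nth)

lemma VarStar_R_lower:
  assumes "overlapped_grouping c R" "supp c \<noteq> {}" "M > 0"
  shows "(\<Sum>P\<in>supp c. (c P)\<^sup>2) / M \<le> VarStar M c R"
proof -
  obtain w0 Ms0 where "est_weights c R w0" "shot_alloc M R Ms0"
    using exists_admissible[OF assms] by blast
  then show ?thesis by (rule VarStar_ge) (use est_var_lower assms(3) in blast)
qed

lemma VarStar_G_upper:
  assumes "overlapped_grouping c G" "supp c \<noteq> {}" "M > 0"
  shows "VarStar M c G \<le> real (length G) * (\<Sum>P\<in>supp c. (c P)\<^sup>2) / M"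
proof -
  define idx where "idx P = (SOME j. j < length G \<and> P \<in> G ! j)" for P
  have cov: "\<forall>P\<in>supp c. idx P < length G \<and> P \<in> G ! idx P"
  proof
    fix P assume "P \<in> supp c"
    then have "\<exists>j. j < length G \<and> P \<in> G ! j" by (rule cover_idx[OF assms(1)])
    then show "idx P < length G \<and> P \<in> G ! idx P" unfolding idx_def by (rule someI_ex)
  qed
  have lp: "length G > 0" using assms(1,2) unfolding overlapped_grouping_def by auto
  then have sa: "shot_alloc M G (\<lambda>_. M / length G)"
    unfolding shot_alloc_def using assms(3) by auto
  have "VarStar M c G \<le> est_var c G (\<lambda>P j. if j = idx P then 1 else 0) (\<lambda>_. M / length G)"
    by (rule VarStar_le[OF idx_weights[OF cov] sa])
  also have "\<dots> = (\<Sum>P\<in>supp c. (c P)\<^sup>2 / (M / length G))" by (rule idx_var[OF cov])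
  also have "\<dots> = real (length G) * (\<Sum>P\<in>supp c. (c P)\<^sup>2) / M"
    by (simp add: sum_divide_distrib[symmetric] sum_distrib_left mult.commute)
  finally show ?thesis .
qed

lemma ratio_upper:
  assumes "pauli_hamiltonian n c" "overlapped_grouping c G" "overlapped_grouping c R" "M > 0"
  shows "VarStar M c G / VarStar M c R \<le> real (length G)"
proof -
  let ?S = "\<Sum>P\<in>supp c. (c P)\<^sup>2"
  have ne: "supp c \<noteq> {}" and fin: "finite (supp c)" using assms(1) unfolding pauli_hamiltonian_def by auto
  have Spos: "?S > 0"
  proof -
    obtain P where P: "P \<in> supp c" using ne by blast
    then have "0 < (c P)\<^sup>2" by (simp add: supp_def)
    also have "(c P)\<^sup>2 \<le> ?S" using P fin by (intro member_le_sum) auto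
    finally show ?thesis .
  qed
  have R: "?S / M \<le> VarStar M c R" by (rule VarStar_R_lower[OF assms(3) ne assms(4)])
  have G: "VarStar M c G \<le> real (length G) * ?S / M" by (rule VarStar_G_upper[OF assms(2) ne assms(4)])
  obtain w0 Ms0 where adm: "est_weights c G w0" "shot_alloc M G Ms0"
    using exists_admissible[OF assms(2) ne assms(4)] by blast
  have G0: "0 \<le> VarStar M c G" by (rule VarStar_ge[OF adm]) (rule est_var_nonneg)
  have SM: "?S / M > 0" using Spos assms(4) by simp
  have "VarStar M c G / VarStar M c R \<le> VarStar M c G / (?S / M)"
  proof (rule divide_left_mono[OF R G0])
    show "0 < VarStar M c R * (?S / M)" using R SM by (intro mult_pos_pos) auto
  qed
  also have "\<dots> \<le> (real (length G) * ?S / M) / (?S / M)"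
    using G SM by (intro divide_right_mono) auto
  also have "\<dots> = real (length G)" using Spos assms(4) by simp
  finally show ?thesis .
qed

lemma grouping_lower:
  assumes g: "grouping c G" and fin: "finite (supp c)" and m: "length G = m" "m > 0"
    and s: "0 \<le> s" "\<forall>i<m. s \<le> (\<Sum>P\<in>G!i. (c P)\<^sup>2)"
    and w: "est_weights c G w" and Ms: "shot_alloc M G Ms" and M: "M > 0"
  shows "s * real m ^ 2 / M \<le> est_var c G w Ms"
proof -
  have og: "overlapped_grouping c G" and dis: "\<forall>i<m. \<forall>j<m. i \<noteq> j \<longrightarrow> G ! i \<inter> G ! j = {}"
    using g m unfolding grouping_def by auto
  have sub: "\<forall>i<m. G ! i \<subseteq> supp c" using og m unfolding overlapped_grouping_def by auto
  have Gam: "Gamma G P = {i}" if "i < m" "P \<in> G ! i" for i P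
    using dis that m unfolding Gamma_def by auto
  have suppU: "supp c = \<Union> ((!) G ` {..<m})"
    using og m unfolding overlapped_grouping_def by (simp add: set_nth_img)
  have finG: "\<forall>i\<in>{..<m}. finite (G ! i)" using sub fin by (meson finite_subset lessThan_iff)
  have "est_var c G w Ms = (\<Sum>i<m. \<Sum>P\<in>G!i. (c P)\<^sup>2 * (\<Sum>j\<in>Gamma G P. (w P j)\<^sup>2 / Ms j))"
    unfolding est_var_def suppU
    by (rule sum.UNION_disjoint) (use finG dis in auto)
  also have "\<dots> = (\<Sum>i<m. (\<Sum>P\<in>G!i. (c P)\<^sup>2) / Ms i)"
  proof (rule sum.cong[OF refl])
    fix i assume i: "i \<in> {..<m}"
    have "(\<Sum>P\<in>G!i. (c P)\<^sup>2 * (\<Sum>j\<in>Gamma G P. (w P j)\<^sup>2 / Ms j)) = (\<Sum>P\<in>G!i. (c P)\<^sup>2 / Ms i)"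
    proof (rule sum.cong[OF refl])
      fix P assume P: "P \<in> G ! i"
      have "P \<in> supp c" using P sub i by auto
      then have "(\<Sum>j\<in>Gamma G P. w P j) = 1" using w unfolding est_weights_def by auto
      then have "w P i = 1" using Gam[of i P] i P by simp
      then show "(c P)\<^sup>2 * (\<Sum>j\<in>Gamma G P. (w P j)\<^sup>2 / Ms j) = (c P)\<^sup>2 / Ms i"
        using Gam[of i P] i P by simp
    qed
    then show "(\<Sum>P\<in>G!i. (c P)\<^sup>2 * (\<Sum>j\<in>Gamma G P. (w P j)\<^sup>2 / Ms j)) = (\<Sum>P\<in>G!i. (c P)\<^sup>2) / Ms i"
      by (simp add: sum_divide_distrib)
  qed
  also have "\<dots> \<ge> (\<Sum>i<m. s * (1 / Ms i))"
  proof (rule sum_mono)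
    fix i assume i: "i \<in> {..<m}"
    then have "0 < Ms i" using Ms m unfolding shot_alloc_def by auto
    then show "s * (1 / Ms i) \<le> (\<Sum>P\<in>G!i. (c P)\<^sup>2) / Ms i"
      using s i by (simp add: divide_right_mono)
  qed
  moreover have "(\<Sum>i<m. s * (1 / Ms i)) = s * (\<Sum>i<m. 1 / Ms i)" by (simp add: sum_distrib_left)
  moreover have "real m ^ 2 / M \<le> (\<Sum>i<m. 1 / Ms i)"
    by (rule recip_sum) (use Ms m M in \<open>auto simp: shot_alloc_def\<close>)
  ultimately show ?thesis using s(1)
    by (smt (verit) mult_left_mono times_divide_eq_right)
qed



lemma si_append_new: "(\<forall>g\<in>set L. \<not> (\<forall>Q\<in>g. commutes Q x)) \<Longrightarrow> si_insert L x = L @ [{x}]"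
  by (induction L) auto

lemma si_insert_mid: "(\<forall>g\<in>set L1. \<not> (\<forall>Q\<in>g. commutes Q x)) \<Longrightarrow> (\<forall>Q\<in>g. commutes Q x) \<Longrightarrow>
    si_insert (L1 @ g # L2) x = L1 @ insert x g # L2"
  by (induction L1) auto

lemma nth_notin_take: "distinct xs \<Longrightarrow> t < length xs \<Longrightarrow> xs ! t \<notin> set (take t xs)"
  by (auto simp: in_set_conv_nth nth_eq_iff_index_eq)

lemma si_struct:
  assumes dist: "distinct ord" and setord: "set ord \<subseteq> A \<union> B" and AB: "A \<inter> B = {}"
    and H1: "\<forall>a\<in>A. \<forall>a'\<in>A. a \<noteq> a' \<longrightarrow> \<not> commutes a a'"
    and H2: "\<forall>b\<in>B. \<forall>a\<in>A. \<forall>a'\<in>A. commutes a b \<longrightarrow> commutes a' b \<longrightarrow> a = a'"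
    and H3: "\<forall>b\<in>B. \<forall>b'\<in>B. commutes b b'"
    and H4: "\<forall>t<length ord. ord ! t \<in> B \<longrightarrow> (\<exists>a\<in>set (take t ord). a \<in> A \<and> commutes a (ord ! t))"
  shows "t \<le> length ord \<Longrightarrow> foldl si_insert [] (take t ord) =
     map (\<lambda>a. insert a {b \<in> set (take t ord). b \<in> B \<and> commutes a b}) (filter (\<lambda>P. P \<in> A) (take t ord))"
proof (induction t)
  case 0
  then show ?case by simp
next
  case (Suc t)
  then have t: "t < length ord" by simp
  define xs where "xs = take t ord"
  define x where "x = ord ! t"
  have tk: "take (Suc t) ord = xs @ [x]" unfolding xs_def x_def using t by (simp add: take_Suc_conv_app_nth)
  have xn: "x \<notin> set xs" unfolding xs_def x_def using nth_notin_take[OF dist t] .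
  have xAB: "x \<in> A \<union> B" using setord t unfolding x_def by (meson nth_mem subsetD)
  have xsAB: "set xs \<subseteq> A \<union> B" using setord unfolding xs_def by (meson order.trans set_take_subset)
  define grp where "grp a = insert a {b \<in> set xs. b \<in> B \<and> commutes a b}" for a
  have IH: "foldl si_insert [] xs = map grp (filter (\<lambda>P. P \<in> A) xs)"
    using Suc unfolding xs_def grp_def by simp
  have LHS: "foldl si_insert [] (take (Suc t) ord) = si_insert (map grp (filter (\<lambda>P. P \<in> A) xs)) x"
    using IH tk by simp
  define grp' where "grp' a = insert a {b \<in> set (xs @ [x]). b \<in> B \<and> commutes a b}" for a
  have RHS: "map (\<lambda>a. insert a {b \<in> set (take (Suc t) ord). b \<in> B \<and> commutes a b}) (filter (\<lambda>P. P \<in> A) (take (Suc t) ord))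
     = map grp' (filter (\<lambda>P. P \<in> A) (xs @ [x]))" unfolding grp'_def tk ..
  show ?case
  proof (cases "x \<in> A")
    case True
    then have xB: "x \<notin> B" using AB by auto
    have "\<forall>g\<in>set (map grp (filter (\<lambda>P. P \<in> A) xs)). \<not> (\<forall>Q\<in>g. commutes Q x)"
    proof
      fix g assume "g \<in> set (map grp (filter (\<lambda>P. P \<in> A) xs))"
      then obtain a where a: "a \<in> A" "a \<in> set xs" "g = grp a" by auto
      then have "a \<noteq> x" using xn by auto
      then have "\<not> commutes a x" using H1 a True by auto
      moreover have "a \<in> g" using a unfolding grp_def by auto
      ultimately show "\<not> (\<forall>Q\<in>g. commutes Q x)" by auto
    qed
    then have L: "si_insert (map grp (filter (\<lambda>P. P \<in> A) xs)) x = map grp (filter (\<lambda>P. P \<in> A) xs) @ [{x}]"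
      by (rule si_append_new)
    have g1: "grp' a = grp a" for a unfolding grp'_def grp_def using xB by auto
    have g2: "grp' x = {x}"
    proof -
      have "\<not> (b \<in> set xs \<and> b \<in> B \<and> commutes x b)" for b
      proof
        assume b: "b \<in> set xs \<and> b \<in> B \<and> commutes x b"
        then obtain t' where t': "t' < t" "b = ord ! t'" unfolding xs_def using t
          by (auto simp: in_set_conv_nth)
        then obtain a where a: "a \<in> set (take t' ord)" "a \<in> A" "commutes a b"
          using H4 b t by (metis order.strict_trans)
        then have "a = x" using H2 b True by blast
        moreover have "set (take t' ord) \<subseteq> set xs" unfolding xs_def using t'
          by (simp add: set_take_subset_set_take)
        ultimately show False using a xn by auto
      qed
      then show ?thesis unfolding grp'_def using xB by auto
    qed
    show ?thesis unfolding LHS RHS L using True g1 g2 by simp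
  next
    case False
    then have xB: "x \<in> B" using xAB by auto
    obtain a0 where a0: "a0 \<in> set xs" "a0 \<in> A" "commutes a0 x"
      using H4 t xB unfolding xs_def x_def by blast
    then have "a0 \<in> set (filter (\<lambda>P. P \<in> A) xs)" by simp
    then obtain ys1 ys2 where sp: "filter (\<lambda>P. P \<in> A) xs = ys1 @ a0 # ys2" by (meson split_list)
    have df: "distinct (filter (\<lambda>P. P \<in> A) xs)" unfolding xs_def using dist by simp
    then have n1: "a0 \<notin> set ys1" "a0 \<notin> set ys2" using sp by auto
    have ysA: "\<And>a. a \<in> set ys1 \<union> set ys2 \<Longrightarrow> a \<in> A \<and> a \<in> set xs"
    proof -
      fix a assume "a \<in> set ys1 \<union> set ys2"
      then have "a \<in> set (filter (\<lambda>P. P \<in> A) xs)" unfolding sp by auto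
      then show "a \<in> A \<and> a \<in> set xs" by simp
    qed
    have nc: "\<And>a. a \<in> set ys1 \<union> set ys2 \<Longrightarrow> \<not> commutes a x"
      using ysA n1 H2 xB a0 by blast
    have L: "si_insert (map grp (filter (\<lambda>P. P \<in> A) xs)) x = map grp ys1 @ insert x (grp a0) # map grp ys2"
      unfolding sp
    proof (simp only: map_append list.map, rule si_insert_mid)
      show "\<forall>g\<in>set (map grp ys1). \<not> (\<forall>Q\<in>g. commutes Q x)"
      proof
        fix g assume "g \<in> set (map grp ys1)"
        then obtain a where "a \<in> set ys1" "g = grp a" by auto
        then show "\<not> (\<forall>Q\<in>g. commutes Q x)" using nc unfolding grp_def by auto
      qed
      show "\<forall>Q\<in>grp a0. commutes Q x" unfolding grp_def using a0 H3 xB by auto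
    qed
    have g1: "grp' a = grp a" if "a \<in> set ys1 \<union> set ys2" for a
      unfolding grp'_def grp_def using nc[OF that] by (auto dest: commutes_sym)
    have g2: "grp' a0 = insert x (grp a0)" unfolding grp'_def grp_def using a0 xB by auto
    have "map grp' (filter (\<lambda>P. P \<in> A) (xs @ [x])) = map grp' ys1 @ grp' a0 # map grp' ys2"
      using sp False by simp
    also have "\<dots> = map grp ys1 @ insert x (grp a0) # map grp ys2"
      using g1 g2 by simp
    finally show ?thesis unfolding LHS RHS L by simp
  qed
qed



lemma si_final:
  assumes dist: "distinct ord" and setord: "set ord = A \<union> B" and AB: "A \<inter> B = {}"
    and H1: "\<forall>a\<in>A. \<forall>a'\<in>A. a \<noteq> a' \<longrightarrow> \<not> commutes a a'"
    and H2: "\<forall>b\<in>B. \<forall>a\<in>A. \<forall>a'\<in>A. commutes a b \<longrightarrow> commutes a' b \<longrightarrow> a = a'"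
    and H3: "\<forall>b\<in>B. \<forall>b'\<in>B. commutes b b'"
    and H4: "\<forall>t<length ord. ord ! t \<in> B \<longrightarrow> (\<exists>a\<in>set (take t ord). a \<in> A \<and> commutes a (ord ! t))"
    and H5: "\<forall>b\<in>B. \<exists>a\<in>A. commutes a b"
    and supp: "supp c = A \<union> B"
  shows "sorted_insertion ord = map (\<lambda>a. insert a {b \<in> B. commutes a b}) (filter (\<lambda>P. P \<in> A) ord)"
    and "length (sorted_insertion ord) = card A"
    and "grouping c (sorted_insertion ord)"
    and "\<forall>i<length (sorted_insertion ord). \<exists>a\<in>A. sorted_insertion ord ! i = insert a {b \<in> B. commutes a b}"
proof -
  define grp where "grp a = insert a {b \<in> B. commutes a b}" for a
  define L where "L = filter (\<lambda>P. P \<in> A) ord"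
  have "foldl si_insert [] (take (length ord) ord) =
     map (\<lambda>a. insert a {b \<in> set (take (length ord) ord). b \<in> B \<and> commutes a b}) (filter (\<lambda>P. P \<in> A) (take (length ord) ord))"
    by (rule si_struct[OF dist _ AB H1 H2 H3 H4]) (use setord in auto)
  moreover have "{b \<in> set ord. b \<in> B \<and> commutes a b} = {b \<in> B. commutes a b}" for a
    using setord by auto
  ultimately have SI: "sorted_insertion ord = map grp L"
    unfolding sorted_insertion_def grp_def L_def by simp
  then show "sorted_insertion ord = map (\<lambda>a. insert a {b \<in> B. commutes a b}) (filter (\<lambda>P. P \<in> A) ord)"
    unfolding grp_def L_def by simp
  have dL: "distinct L" and sL: "set L = A" unfolding L_def using dist setord by auto
  show "length (sorted_insertion ord) = card A" using SI dL sL by (metis distinct_card length_map)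
  show "\<forall>i<length (sorted_insertion ord). \<exists>a\<in>A. sorted_insertion ord ! i = insert a {b \<in> B. commutes a b}"
    using SI sL unfolding grp_def by auto
  show "grouping c (sorted_insertion ord)"
    unfolding grouping_def overlapped_grouping_def
  proof (intro conjI allI impI)
    fix j assume j: "j < length (sorted_insertion ord)"
    then have "L ! j \<in> A" "sorted_insertion ord ! j = grp (L ! j)" using SI sL by auto
    then obtain a where a: "a \<in> A" "sorted_insertion ord ! j = grp a" by blast
    show "sorted_insertion ord ! j \<subseteq> supp c" using a supp unfolding grp_def by auto
    show "commuting_set (sorted_insertion ord ! j)"
      unfolding commuting_set_def a(2) grp_def
      using H3 by (auto intro: commutes_refl commutes_sym)
  next
    show "\<Union> (set (sorted_insertion ord)) = supp c"
      unfolding SI supp using sL H5 unfolding grp_def by auto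
  next
    fix i j assume i: "i < length (sorted_insertion ord)" and j: "j < length (sorted_insertion ord)" and ij: "i \<noteq> j"
    then have ne: "L ! i \<noteq> L ! j" and inA: "L ! i \<in> A" "L ! j \<in> A" using SI dL sL
      by (auto simp: nth_eq_iff_index_eq)
    have "grp (L ! i) \<inter> grp (L ! j) = {}"
      using ne inA AB H2 unfolding grp_def by blast
    then show "sorted_insertion ord ! i \<inter> sorted_insertion ord ! j = {}" using SI i j by simp
  qed
qed

lemma si_order_exists:
  assumes "finite (supp c)"
  shows "\<exists>ord. si_order c ord"
proof -
  obtain xs where xs: "set xs = supp c" "distinct xs" using finite_distinct_list[OF assms] by blast
  define ord where "ord = sort_key (\<lambda>P. - \<bar>c P\<bar>) xs"
  have "sorted (map (\<lambda>P. - \<bar>c P\<bar>) ord)" unfolding ord_def by (rule sorted_sort_key)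
  then have "sorted_wrt (\<lambda>P Q. - \<bar>c P\<bar> \<le> - \<bar>c Q\<bar>) ord" by (simp add: sorted_map)
  then have "sorted_wrt (\<lambda>P Q. \<bar>c P\<bar> \<ge> \<bar>c Q\<bar>) ord" by (rule sorted_wrt_mono_rel[rotated]) auto
  moreover have "distinct ord" "set ord = supp c" using xs unfolding ord_def by auto
  ultimately show ?thesis unfolding si_order_def by blast
qed



definition aS :: "nat \<Rightarrow> nat \<Rightarrow> pstring" where
  "aS m j = map (\<lambda>p. if p < j then PZ else if p = j then PX else PI) [0..<2*m]"

definition bS :: "nat \<Rightarrow> nat \<Rightarrow> nat \<Rightarrow> pstring" where
  "bS m j l = map (\<lambda>p. if p < m then (if p = j then PI else PZ) else if p = m + l then PZ else PI) [0..<2*m]"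

lemma len_aS[simp]: "length (aS m j) = 2*m" by (simp add: aS_def)
lemma len_bS[simp]: "length (bS m j l) = 2*m" by (simp add: bS_def)
lemma nth_aS: "p < 2*m \<Longrightarrow> aS m j ! p = (if p < j then PZ else if p = j then PX else PI)"
  by (simp add: aS_def)
lemma nth_bS: "p < 2*m \<Longrightarrow> bS m j l ! p = (if p < m then (if p = j then PI else PZ) else if p = m + l then PZ else PI)"
  by (simp add: bS_def)

lemma comm_aa:
  assumes "i < m" "j < m" "i \<noteq> j"
  shows "\<not> commutes (aS m i) (aS m j)"
proof -
  have "{k. k < 2*m \<and> anti (aS m i ! k) (aS m j ! k)} = {min i j}"
    using assms by (auto simp: nth_aS anti_def split: if_splits)
  then show ?thesis by (simp add: commutes_iff[of _ "2*m"])
qed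

lemma comm_ab:
  assumes "j < m" "j' < m"
  shows "commutes (aS m j) (bS m j' l) \<longleftrightarrow> j = j'"
proof -
  have "{k. k < 2*m \<and> anti (aS m j ! k) (bS m j' l ! k)} = (if j = j' then {} else {j})"
    using assms by (auto simp: nth_aS nth_bS anti_def split: if_splits)
  then show ?thesis by (simp add: commutes_iff[of _ "2*m"])
qed

lemma comm_bb: "commutes (bS m j l) (bS m j' l')"
proof -
  have "{k. k < 2*m \<and> anti (bS m j l ! k) (bS m j' l' ! k)} = {}"
    by (auto simp: nth_bS anti_def split: if_splits)
  note eq = this
  have iff: "commutes (bS m j l) (bS m j' l') \<longleftrightarrow> even (card {k. k < 2*m \<and> anti (bS m j l ! k) (bS m j' l' ! k)})"
    by (rule commutes_iff) simp_all
  show ?thesis unfolding iff eq by simp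
qed

lemma inj_aS: "inj_on (aS m) {..<m}"
proof (rule inj_onI)
  fix i j assume ij: "i \<in> {..<m}" "j \<in> {..<m}" "aS m i = aS m j"
  show "i = j"
  proof (rule ccontr)
    assume ne: "i \<noteq> j"
    have "aS m i ! min i j = aS m j ! min i j" using ij by simp
    then show False using ne ij(1,2) by (auto simp: nth_aS min_def split: if_splits)
  qed
qed

lemma inj_bS: "inj_on (\<lambda>(j, l). bS m j l) ({..<m} \<times> {..<m})"
proof (rule inj_onI, clarsimp)
  fix j l j' l' assume a: "j < m" "l < m" "j' < m" "l' < m" "bS m j l = bS m j' l'"
  have "bS m j l ! j = bS m j' l' ! j" using a by simp
  moreover have "j < 2*m" using a by simp
  ultimately have jj: "j = j'" using a(1-4) by (simp add: nth_bS split: if_splits)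
  have "bS m j l ! (m + l) = bS m j' l' ! (m + l)" using a by simp
  moreover have "m + l < 2*m" using a by simp
  ultimately have "l = l'" using a(1-4) by (simp add: nth_bS split: if_splits)
  with jj show "j = j' \<and> l = l'" by simp
qed

lemma aS_ne_bS: "j < m \<Longrightarrow> aS m j \<noteq> bS m j' l"
proof
  assume "j < m" "aS m j = bS m j' l"
  then have "aS m j ! j = bS m j' l ! j" by simp
  then show False using \<open>j < m\<close> by (auto simp: nth_aS nth_bS split: if_splits)
qed

definition Aset :: "nat \<Rightarrow> pstring set" where "Aset m = aS m ` {..<m}"
definition Bset :: "nat \<Rightarrow> pstring set" where "Bset m = (\<lambda>(j, l). bS m j l) ` ({..<m} \<times> {..<m})"
definition cf :: "nat \<Rightarrow> pstring \<Rightarrow> real" where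
  "cf m P = (if P \<in> Aset m then 2 else if P \<in> Bset m then 1 else 0)"
definition Rg :: "nat \<Rightarrow> pstring set list" where
  "Rg m = Bset m # map (\<lambda>j. {aS m j}) [0..<m]"

lemma AB_disj: "Aset m \<inter> Bset m = {}"
  unfolding Aset_def Bset_def using aS_ne_bS by fastforce

lemma card_A: "card (Aset m) = m" unfolding Aset_def by (simp add: card_image inj_aS)
lemma card_B: "card (Bset m) = m * m" unfolding Bset_def by (simp add: card_image inj_bS card_cartesian_product)

lemma supp_cf: "supp (cf m) = Aset m \<union> Bset m"
  unfolding supp_def cf_def by auto

lemma fin_AB: "finite (Aset m)" "finite (Bset m)" unfolding Aset_def Bset_def by auto

lemma ham: "m > 0 \<Longrightarrow> pauli_hamiltonian (2*m) (cf m)"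
  unfolding pauli_hamiltonian_def supp_cf using fin_AB
  by (auto simp: Aset_def Bset_def)

lemma coef_bounds: "P \<in> supp (cf m) \<Longrightarrow> 1 \<le> \<bar>cf m P\<bar> \<and> \<bar>cf m P\<bar> \<le> 2"
  unfolding supp_cf cf_def by auto

lemma Rg_og: "overlapped_grouping (cf m) (Rg m)"
  unfolding overlapped_grouping_def
proof (intro conjI allI impI)
  fix j assume j: "j < length (Rg m)"
  show "Rg m ! j \<subseteq> supp (cf m)"
  proof (cases j)
    case 0 then show ?thesis by (simp add: Rg_def supp_cf)
  next
    case (Suc k) then show ?thesis using j by (auto simp: Rg_def supp_cf Aset_def)
  qed
  show "commuting_set (Rg m ! j)"
  proof (cases j)
    case 0 then show ?thesis by (auto simp: Rg_def commuting_set_def Bset_def comm_bb)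
  next
    case (Suc k) then show ?thesis using j by (auto simp: Rg_def commuting_set_def commutes_refl)
  qed
next
  show "\<Union> (set (Rg m)) = supp (cf m)" by (auto simp: Rg_def supp_cf Aset_def)
qed



lemma VarStar_pos:
  assumes "pauli_hamiltonian n c" "overlapped_grouping c R" "M > 0"
  shows "0 < VarStar M c R"
proof -
  let ?S = "\<Sum>P\<in>supp c. (c P)\<^sup>2"
  have ne: "supp c \<noteq> {}" and fin: "finite (supp c)" using assms(1) unfolding pauli_hamiltonian_def by auto
  have Spos: "?S > 0"
  proof -
    obtain P where P: "P \<in> supp c" using ne by blast
    then have "0 < (c P)\<^sup>2" by (simp add: supp_def)
    also have "(c P)\<^sup>2 \<le> ?S" using P fin by (intro member_le_sum) auto
    finally show ?thesis .
  qed
  have "?S / M \<le> VarStar M c R" by (rule VarStar_R_lower[OF assms(2) ne assms(3)])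
  moreover have "?S / M > 0" using Spos assms(3) by simp
  ultimately show ?thesis by linarith
qed

lemma cf_a: "j < m \<Longrightarrow> cf m (aS m j) = 2"
  unfolding cf_def Aset_def by auto

lemma cf_b: "j < m \<Longrightarrow> l < m \<Longrightarrow> cf m (bS m j l) = 1"
proof -
  assume "j < m" "l < m"
  then have "bS m j l \<in> Bset m" unfolding Bset_def by auto
  then show ?thesis using AB_disj unfolding cf_def by auto
qed

lemma B_of_a: "j < m \<Longrightarrow> {b \<in> Bset m. commutes (aS m j) b} = bS m j ` {..<m}"
  unfolding Bset_def using comm_ab by auto

lemma si_props:
  assumes m: "m \<ge> 1" and so: "si_order (cf m) ord"
  shows "length (sorted_insertion ord) = m"
    and "grouping (cf m) (sorted_insertion ord)"
    and "\<forall>i<m. real m \<le> (\<Sum>P\<in>sorted_insertion ord ! i. (cf m P)\<^sup>2)"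
proof -
  let ?A = "Aset m" and ?B = "Bset m"
  have dist: "distinct ord" and setord: "set ord = ?A \<union> ?B"
    and srt: "sorted_wrt (\<lambda>P Q. \<bar>cf m P\<bar> \<ge> \<bar>cf m Q\<bar>) ord"
    using so unfolding si_order_def supp_cf by auto
  have H1: "\<forall>a\<in>?A. \<forall>a'\<in>?A. a \<noteq> a' \<longrightarrow> \<not> commutes a a'"
    unfolding Aset_def using comm_aa by auto
  have H2: "\<forall>b\<in>?B. \<forall>a\<in>?A. \<forall>a'\<in>?A. commutes a b \<longrightarrow> commutes a' b \<longrightarrow> a = a'"
    unfolding Aset_def Bset_def using comm_ab by auto
  have H3: "\<forall>b\<in>?B. \<forall>b'\<in>?B. commutes b b'"
    unfolding Bset_def using comm_bb by auto
  have H5: "\<forall>b\<in>?B. \<exists>a\<in>?A. commutes a b"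
    unfolding Aset_def Bset_def using comm_ab by auto
  have H4: "\<forall>t<length ord. ord ! t \<in> ?B \<longrightarrow> (\<exists>a\<in>set (take t ord). a \<in> ?A \<and> commutes a (ord ! t))"
  proof (intro allI impI)
    fix t assume t: "t < length ord" and inB: "ord ! t \<in> ?B"
    then obtain j l where jl: "j < m" "l < m" "ord ! t = bS m j l" unfolding Bset_def by auto
    have "aS m j \<in> set ord" using setord jl unfolding Aset_def by auto
    then obtain s where s: "s < length ord" "ord ! s = aS m j" by (auto simp: in_set_conv_nth)
    have "s \<noteq> t" using s jl aS_ne_bS by metis
    moreover have "\<not> t < s"
    proof
      assume "t < s"
      then have "\<bar>cf m (ord ! t)\<bar> \<ge> \<bar>cf m (ord ! s)\<bar>" using srt s(1) unfolding sorted_wrt_iff_nth_less by blast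
      then show False using jl s cf_a cf_b by auto
    qed
    ultimately have st: "s < t" by simp
    then have "aS m j \<in> set (take t ord)" using s by (metis in_set_conv_nth length_take min_less_iff_conj nth_take)
    moreover have "aS m j \<in> ?A" using jl unfolding Aset_def by auto
    moreover have "commutes (aS m j) (ord ! t)" using jl comm_ab by auto
    ultimately show "\<exists>a\<in>set (take t ord). a \<in> ?A \<and> commutes a (ord ! t)" by blast
  qed
  note SF = si_final[OF dist setord AB_disj H1 H2 H3 H4 H5 supp_cf]
  show "length (sorted_insertion ord) = m" using SF(2) card_A by simp
  show "grouping (cf m) (sorted_insertion ord)" by (rule SF(3))
  show "\<forall>i<m. real m \<le> (\<Sum>P\<in>sorted_insertion ord ! i. (cf m P)\<^sup>2)"
  proof (intro allI impI)
    fix i assume "i < m"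
    then obtain a where a: "a \<in> ?A" "sorted_insertion ord ! i = insert a {b \<in> ?B. commutes a b}"
      using SF(2,4) card_A by auto
    then obtain j where j: "j < m" "a = aS m j" unfolding Aset_def by auto
    have eq: "{b \<in> ?B. commutes a b} = bS m j ` {..<m}" using B_of_a j by simp
    have fin: "finite (bS m j ` {..<m})" by simp
    have inj: "inj_on (bS m j) {..<m}"
      using inj_bS[of m] j unfolding inj_on_def by auto
    have "(\<Sum>P\<in>bS m j ` {..<m}. (cf m P)\<^sup>2) = (\<Sum>l<m. (cf m (bS m j l))\<^sup>2)"
      by (rule sum.reindex[OF inj, unfolded comp_def])
    also have "\<dots> = real m" using cf_b j by simp
    finally have s1: "(\<Sum>P\<in>bS m j ` {..<m}. (cf m P)\<^sup>2) = real m" .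
    have "(\<Sum>P\<in>bS m j ` {..<m}. (cf m P)\<^sup>2) \<le> (\<Sum>P\<in>insert a (bS m j ` {..<m}). (cf m P)\<^sup>2)"
      by (rule sum_mono2) auto
    then show "real m \<le> (\<Sum>P\<in>sorted_insertion ord ! i. (cf m P)\<^sup>2)" using a(2) eq s1 by simp
  qed
qed



lemma R_upper:
  assumes m: "m \<ge> 1" and M: "M > 0"
  shows "VarStar M (cf m) (Rg m) \<le> 10 * real m ^ 2 / M"
proof -
  define idx where "idx P = (if P \<in> Bset m then 0 else Suc (inv_into {..<m} (aS m) P))" for P
  define Ms :: "nat \<Rightarrow> real" where "Ms j = (if j = 0 then M / 2 else M / (2 * real m))" for j
  have lenR: "length (Rg m) = Suc m" by (simp add: Rg_def)
  have cov: "\<forall>P\<in>supp (cf m). idx P < length (Rg m) \<and> P \<in> Rg m ! idx P"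
  proof
    fix P assume "P \<in> supp (cf m)"
    then have P: "P \<in> Aset m \<union> Bset m" by (simp add: supp_cf)
    show "idx P < length (Rg m) \<and> P \<in> Rg m ! idx P"
    proof (cases "P \<in> Bset m")
      case True then show ?thesis by (simp add: idx_def lenR Rg_def)
    next
      case False
      then have PA: "P \<in> aS m ` {..<m}" using P unfolding Aset_def by auto
      define k where "k = inv_into {..<m} (aS m) P"
      have k: "k < m" using PA unfolding k_def by (metis inv_into_into lessThan_iff)
      have Pk: "aS m k = P" using PA unfolding k_def by (simp add: f_inv_into_f)
      have "Rg m ! Suc k = {aS m k}" using k by (simp add: Rg_def)
      then show ?thesis using False k Pk by (simp add: idx_def lenR k_def)
    qed
  qed
  have sa: "shot_alloc M (Rg m) Ms"
    unfolding shot_alloc_def lenR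
  proof
    show "\<forall>j<Suc m. 0 < Ms j" using M m by (simp add: Ms_def)
    have "(\<Sum>j<Suc m. Ms j) = Ms 0 + (\<Sum>j<m. Ms (Suc j))" by (rule sum.lessThan_Suc_shift)
    also have "\<dots> = M / 2 + real m * (M / (2 * real m))" by (simp add: Ms_def)
    also have "\<dots> = M" using m by (simp add: field_simps)
    finally show "(\<Sum>j<Suc m. Ms j) = M" .
  qed
  have "VarStar M (cf m) (Rg m) \<le> est_var (cf m) (Rg m) (\<lambda>P j. if j = idx P then 1 else 0) Ms"
    by (rule VarStar_le[OF idx_weights[OF cov] sa])
  also have "\<dots> = (\<Sum>P\<in>supp (cf m). (cf m P)\<^sup>2 / Ms (idx P))" by (rule idx_var[OF cov])
  also have "\<dots> = (\<Sum>P\<in>Aset m. (cf m P)\<^sup>2 / Ms (idx P)) + (\<Sum>P\<in>Bset m. (cf m P)\<^sup>2 / Ms (idx P))"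
    unfolding supp_cf by (rule sum.union_disjoint) (use fin_AB AB_disj in auto)
  also have "(\<Sum>P\<in>Aset m. (cf m P)\<^sup>2 / Ms (idx P)) = (\<Sum>P\<in>Aset m. 4 / (M / (2 * real m)))"
  proof (rule sum.cong[OF refl])
    fix P assume P: "P \<in> Aset m"
    then have "P \<notin> Bset m" using AB_disj by auto
    moreover have "cf m P = 2" using P by (simp add: cf_def)
    ultimately show "(cf m P)\<^sup>2 / Ms (idx P) = 4 / (M / (2 * real m))" by (simp add: idx_def Ms_def)
  qed
  also have "(\<Sum>P\<in>Bset m. (cf m P)\<^sup>2 / Ms (idx P)) = (\<Sum>P\<in>Bset m. 1 / (M / 2))"
  proof (rule sum.cong[OF refl])
    fix P assume P: "P \<in> Bset m"
    then have "P \<notin> Aset m" using AB_disj by auto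
    then have "cf m P = 1" using P by (simp add: cf_def)
    then show "(cf m P)\<^sup>2 / Ms (idx P) = 1 / (M / 2)" using P by (simp add: idx_def Ms_def)
  qed
  also have "(\<Sum>P\<in>Aset m. 4 / (M / (2 * real m))) + (\<Sum>P\<in>Bset m. 1 / (M / 2)) = 10 * real m ^ 2 / M"
    using m M by (simp add: card_A card_B field_simps power2_eq_square)
  finally show ?thesis .
qed

lemma part1:
  assumes m: "m \<ge> (1::nat)"
  shows "\<exists>(n::nat) (c::pstring \<Rightarrow> real) R.
          pauli_hamiltonian n c \<and>
          (\<forall>P\<in>supp c. 1 \<le> \<bar>c P\<bar> \<and> \<bar>c P\<bar> \<le> 2) \<and>
          overlapped_grouping c R \<and>
          (\<exists>ord. si_order c ord) \<and>
          (\<forall>ord. si_order c ord \<longrightarrow>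
              length (sorted_insertion ord) = m \<and>
              (\<forall>M>0. 1/10 * real m \<le> VarStar M c (sorted_insertion ord) / VarStar M c R \<and>
                     VarStar M c (sorted_insertion ord) / VarStar M c R \<le> 1 * real m))"
proof -
  have H: "pauli_hamiltonian (2*m) (cf m)" using m by (intro ham) simp
  have cb: "\<forall>P\<in>supp (cf m). 1 \<le> \<bar>cf m P\<bar> \<and> \<bar>cf m P\<bar> \<le> 2" using coef_bounds by blast
  have og: "overlapped_grouping (cf m) (Rg m)" by (rule Rg_og)
  have ex: "\<exists>ord. si_order (cf m) ord" using si_order_exists H unfolding pauli_hamiltonian_def by blast
  have X: "length (sorted_insertion ord) = m \<and>
              (\<forall>M>0. 1/10 * real m \<le> VarStar M (cf m) (sorted_insertion ord) / VarStar M (cf m) (Rg m) \<and>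
                     VarStar M (cf m) (sorted_insertion ord) / VarStar M (cf m) (Rg m) \<le> 1 * real m)"
    if so: "si_order (cf m) ord" for ord
  proof (intro conjI allI impI)
  note SP = si_props[OF m so]
  show "length (sorted_insertion ord) = m" by (rule SP(1))
  fix M :: real assume M: "M > 0"
  let ?G = "sorted_insertion ord"
  have gog: "overlapped_grouping (cf m) ?G" using SP(2) unfolding grouping_def by simp
  have ne: "supp (cf m) \<noteq> {}" using H unfolding pauli_hamiltonian_def by simp
  show "VarStar M (cf m) ?G / VarStar M (cf m) (Rg m) \<le> 1 * real m"
    using ratio_upper[OF H gog og M] SP(1) by simp
  obtain w0 Ms0 where adm: "est_weights (cf m) ?G w0" "shot_alloc M ?G Ms0"
    using exists_admissible[OF gog ne M] by blast
  have finS: "finite (supp (cf m))" using H unfolding pauli_hamiltonian_def by simp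
  have VG: "real m * real m ^ 2 / M \<le> VarStar M (cf m) ?G"
  proof (rule VarStar_ge[OF adm])
    fix w Ms assume "est_weights (cf m) ?G w" "shot_alloc M ?G Ms"
    then show "real m * real m ^ 2 / M \<le> est_var (cf m) ?G w Ms"
      using grouping_lower[OF SP(2) finS SP(1) _ _ SP(3)] m M by simp
  qed
  have VR: "VarStar M (cf m) (Rg m) \<le> 10 * real m ^ 2 / M" by (rule R_upper[OF m M])
  have VR0: "0 < VarStar M (cf m) (Rg m)" by (rule VarStar_pos[OF H og M])
  have "1/10 * real m = (real m * real m ^ 2 / M) / (10 * real m ^ 2 / M)"
    using m M by (simp add: field_simps power2_eq_square)
  also have "\<dots> \<le> (real m * real m ^ 2 / M) / VarStar M (cf m) (Rg m)"
    using VR VR0 M m by (intro divide_left_mono) (auto simp: zero_less_mult_iff)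
  also have "\<dots> \<le> VarStar M (cf m) ?G / VarStar M (cf m) (Rg m)"
    using VG VR0 by (intro divide_right_mono) auto
  finally show "1/10 * real m \<le> VarStar M (cf m) ?G / VarStar M (cf m) (Rg m)" .
  qed
  show ?thesis using H cb og ex X by blast
qed

theorem theorem1:
  shows
  "(\<exists>a b C1 C2 (m0::nat). 0 < a \<and> a \<le> b \<and> 0 < C1 \<and> 0 < C2 \<and>
      (\<forall>m\<ge>m0. \<exists>(n::nat) (c::pstring \<Rightarrow> real) R.
          pauli_hamiltonian n c \<and>
          (\<forall>P\<in>supp c. a \<le> \<bar>c P\<bar> \<and> \<bar>c P\<bar> \<le> b) \<and>
          overlapped_grouping c R \<and>
          (\<exists>ord. si_order c ord) \<and>
          (\<forall>ord. si_order c ord \<longrightarrow>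
              length (sorted_insertion ord) = m \<and>
              (\<forall>M>0. C1 * real m \<le> VarStar M c (sorted_insertion ord) / VarStar M c R \<and>
                     VarStar M c (sorted_insertion ord) / VarStar M c R \<le> C2 * real m))))
   \<and>
   (\<exists>C>0. \<forall>(n::nat) (c::pstring \<Rightarrow> real) G R (M::real).
      pauli_hamiltonian n c \<longrightarrow> grouping c G \<longrightarrow> overlapped_grouping c R \<longrightarrow> M > 0 \<longrightarrow>
      VarStar M c G / VarStar M c R \<le> C * real (length G))"
proof
  show "\<exists>a b C1 C2 (m0::nat). 0 < a \<and> a \<le> b \<and> 0 < C1 \<and> 0 < C2 \<and>
      (\<forall>m\<ge>m0. \<exists>(n::nat) (c::pstring \<Rightarrow> real) R.
          pauli_hamiltonian n c \<and>
          (\<forall>P\<in>supp c. a \<le> \<bar>c P\<bar> \<and> \<bar>c P\<bar> \<le> b) \<and>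
          overlapped_grouping c R \<and>
          (\<exists>ord. si_order c ord) \<and>
          (\<forall>ord. si_order c ord \<longrightarrow>
              length (sorted_insertion ord) = m \<and>
              (\<forall>M>0. C1 * real m \<le> VarStar M c (sorted_insertion ord) / VarStar M c R \<and>
                     VarStar M c (sorted_insertion ord) / VarStar M c R \<le> C2 * real m)))"
    apply (rule exI[of _ "1::real"], rule exI[of _ "2::real"], rule exI[of _ "1/10::real"],
        rule exI[of _ "1::real"], rule exI[of _ "1::nat"])
    using part1 by simp
next
  show "\<exists>C>0. \<forall>(n::nat) (c::pstring \<Rightarrow> real) G R (M::real).
      pauli_hamiltonian n c \<longrightarrow> grouping c G \<longrightarrow> overlapped_grouping c R \<longrightarrow> M > 0 \<longrightarrow>
      VarStar M c G / VarStar M c R \<le> C * real (length G)"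
    by (rule exI[of _ 1]) (auto simp: grouping_def intro: ratio_upper)
qed


end
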